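(* Consider the distributed detection model in the context, where the fusion center knows $(\alpha,P_{1,0},P_{0,1})$ and uses the optimal (MAP) fusion rule, and let $P_E^*(P_{1,0},P_{0,1})$ denote its resulting error probability. Then the attacking strategies $(P_{1,0}^*,P_{0,1}^* )\in[0,1]^2$ maximizing $P_E^*$ are as follows: if $\alpha>0.5$, any pair $(p_{1,0},p_{0,1})\in[0,1]^2$ satisfying $\alpha(p_{1,0}+p_{0,1})=1$ is optimal; if $\alpha\le 0.5$, $(P_{1,0}^*,P_{0,1}^* )=(1,1)$ is optimal.
   Context: Binary hypothesis test between $H_0$ and $H_1$ with priors $P_0,P_1\in(0,1)$, $P_0+P_1=1$. There are $N$ sensors, each using the same fixed local threshold, so that conditionally on the hypothesis their local decisions $v_i\in\{0,1\}$ are i.i.d. with $P(v_i=1\mid H_1)=P_d$, $P(v_i=1\mid H_0)=P_f$, where $0<P_f<P_d<1$. Each sensor independently is Byzantine with probability $\alpha\in[0,1]$. Honest nodes send $u_i=v_i$; a Byzantine node sends $u_i=1$ with probability $P_{1,0}$ when $v_i=0$ and sends $u_i=0$ with probability $P_{0,1}$ when $v_i=1$. Hence conditionally on $H_j$ the $u_i$ are i.i.d. with $P(u_i=1\mid H_0)=\pi_{1,0}=\alpha(P_{1,0}(1-P_f)+(1-P_{0,1})P_f)+(1-\alpha)P_f$ and $P(u_i=1\mid H_1)=\pi_{1,1}=\alpha(P_{1,0}(1-P_d)+(1-P_{0,1})P_d)+(1-\alpha)P_d$. The MAP fusion rule decides $H_1$ when $P(\mathbf u\mid H_1)/P(\mathbf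 u\mid H_0)>P_0/P_1$ and $H_0$ otherwise; it minimizes the error probability $P(\text{decide }H_1, H_0)+P(\text{decide }H_0,H_1)$ among all fusion rules based on $\mathbf u=(u_1,\dots,u_N)$, and this minimum is $P_E^*$. Equivalently, when $\pi_{1,1}>\pi_{1,0}$ it is the $K$-out-of-$N$ rule deciding $H_1$ iff the number of ones is at least $\left\lceil \ln\left[\frac{P_0}{P_1}\left(\frac{1-\pi_{1,0}}{1-\pi_{1,1}}\right)^{N}\right]\Big/\ln\left[\frac{\pi_{1,1}(1-\pi_{1,0})}{\pi_{1,0}(1-\pi_{1,1})}\right]\right\rceil$. *)

theory Defs
  imports Complex_Main
begin

text \<open>Probability that a transmitted decision equals 1 under H0 and under H1.\<close>
definition pi10 :: "real \<Rightarrow> real \<Rightarrow> real \<Rightarrow> real \<Rightarrow> real" where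
  "pi10 \<alpha> Pf p10 p01 = \<alpha> * (p10 * (1 - Pf) + (1 - p01) * Pf) + (1 - \<alpha>) * Pf"

definition pi11 :: "real \<Rightarrow> real \<Rightarrow> real \<Rightarrow> real \<Rightarrow> real" where
  "pi11 \<alpha> Pd p10 p01 = \<alpha> * (p10 * (1 - Pd) + (1 - p01) * Pd) + (1 - \<alpha>) * Pd"

text \<open>A received vector u in {0,1}^N is represented by the set S of indices i < N with u_i = 1.
  Conditional likelihood of u given that each u_i = 1 independently with probability q.\<close>
definition lik :: "nat \<Rightarrow> real \<Rightarrow> nat set \<Rightarrow> real" where
  "lik N q S = q ^ card S * (1 - q) ^ (N - card S)"

text \<open>MAP fusion rule: decide H1 iff P(u|H1)/P(u|H0) > P0/P1, written without division as
  P1 P(u|H1) > P0 P(u|H0).\<close>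
definition map_decides_H1 ::
  "real \<Rightarrow> real \<Rightarrow> nat \<Rightarrow> real \<Rightarrow> real \<Rightarrow> real \<Rightarrow> real \<Rightarrow> real \<Rightarrow> nat set \<Rightarrow> bool" where
  "map_decides_H1 P0 P1 N \<alpha> Pf Pd p10 p01 S \<longleftrightarrow>
     P1 * lik N (pi11 \<alpha> Pd p10 p01) S > P0 * lik N (pi10 \<alpha> Pf p10 p01) S"

definition PE_star ::
  "real \<Rightarrow> real \<Rightarrow> nat \<Rightarrow> real \<Rightarrow> real \<Rightarrow> real \<Rightarrow> real \<Rightarrow> real \<Rightarrow> real" where
  "PE_star P0 P1 N \<alpha> Pf Pd p10 p01 =
     (\<Sum>S\<in>Pow {..<N}.
        (if map_decides_H1 P0 P1 N \<alpha> Pf Pd p10 p01 S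
         then P0 * lik N (pi10 \<alpha> Pf p10 p01) S
         else P1 * lik N (pi11 \<alpha> Pd p10 p01) S))"

end

theory Submission
  imports Defs
begin

fun g :: "nat \<Rightarrow> real \<Rightarrow> real \<Rightarrow> real \<Rightarrow> real \<Rightarrow> real" where
  "g 0 A B a b = min A B"
| "g (Suc n) A B a b = g n (A*a) (B*b) a b + g n (A*(1-a)) (B*(1-b)) a b"

lemma g_concave:
  assumes "0 \<le> x" "0 \<le> y"
  shows "x * g n u1 u2 a b + y * g n v1 v2 a b \<le> g n (x*u1 + y*v1) (x*u2 + y*v2) a b"
  using assms
proof (induction n arbitrary: u1 u2 v1 v2)
  case 0
  have "x * min u1 u2 \<le> x*u1" "x * min u1 u2 \<le> x*u2" "y * min v1 v2 \<le> y*v1" "y * min v1 v2 \<le> y*v2"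
    using 0 by (auto intro: mult_left_mono)
  then show ?case by simp
next
  case (Suc n)
  have e1: "(x*u1 + y*v1)*a = x*(u1*a) + y*(v1*a)" "(x*u2 + y*v2)*b = x*(u2*b) + y*(v2*b)"
    "(x*u1 + y*v1)*(1-a) = x*(u1*(1-a)) + y*(v1*(1-a))" "(x*u2 + y*v2)*(1-b) = x*(u2*(1-b)) + y*(v2*(1-b))"
    by (simp_all add: algebra_simps)
  show ?case
    using Suc.IH[OF Suc.prems, of "u1*a" "u2*b" "v1*a" "v2*b"]
          Suc.IH[OF Suc.prems, of "u1*(1-a)" "u2*(1-b)" "v1*(1-a)" "v2*(1-b)"]
    by (simp only: g.simps e1) (simp add: algebra_simps)
qed

lemma g_garble:
  assumes "0 \<le> y" "0 \<le> s" "y + s \<le> 1"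
  shows "g n A B a b \<le> g n A B (y + s*a) (y + s*b)"
proof (induction n arbitrary: A B)
  case 0
  then show ?case by simp
next
  case (Suc n)
  let ?a = "y + s*a" and ?b = "y + s*b"
  have c1: "(y+s) * g n (A*a) (B*b) a b + y * g n (A*(1-a)) (B*(1-b)) a b
      \<le> g n ((y+s)*(A*a) + y*(A*(1-a))) ((y+s)*(B*b) + y*(B*(1-b))) a b"
    by (rule g_concave) (use assms in auto)
  have c2: "(1-(y+s)) * g n (A*a) (B*b) a b + (1-y) * g n (A*(1-a)) (B*(1-b)) a b
      \<le> g n ((1-(y+s))*(A*a) + (1-y)*(A*(1-a))) ((1-(y+s))*(B*b) + (1-y)*(B*(1-b))) a b"
    by (rule g_concave) (use assms in auto)
  have e: "(y+s)*(A*a) + y*(A*(1-a)) = A * ?a" "(y+s)*(B*b) + y*(B*(1-b)) = B * ?b"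
     "(1-(y+s))*(A*a) + (1-y)*(A*(1-a)) = A*(1-?a)" "(1-(y+s))*(B*b) + (1-y)*(B*(1-b)) = B*(1-?b)"
    by (simp_all add: algebra_simps)
  have "g (Suc n) A B a b = (y+s) * g n (A*a) (B*b) a b + y * g n (A*(1-a)) (B*(1-b)) a b
     + ((1-(y+s)) * g n (A*a) (B*b) a b + (1-y) * g n (A*(1-a)) (B*(1-b)) a b)"
    by (simp add: algebra_simps)
  also have "\<dots> \<le> g n (A * ?a) (B * ?b) a b + g n (A*(1-?a)) (B*(1-?b)) a b"
    using c1 c2 unfolding e by linarith
  also have "\<dots> \<le> g n (A * ?a) (B * ?b) ?a ?b + g n (A*(1-?a)) (B*(1-?b)) ?a ?b"
    using Suc.IH[of "A * ?a" "B * ?b"] Suc.IH[of "A*(1-?a)" "B*(1-?b)"] by linarith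
  finally show ?case by simp
qed

lemma sum_Pow_Suc:
  "(\<Sum>S\<in>Pow {..<Suc n}. f S) = (\<Sum>S\<in>Pow {..<n}. f S) + (\<Sum>S\<in>Pow {..<n}. f (insert n S))"
proof -
  have "Pow {..<Suc n} = Pow {..<n} \<union> insert n ` Pow {..<n}"
    by (simp add: lessThan_Suc Pow_insert)
  moreover have "Pow {..<n} \<inter> insert n ` Pow {..<n} = {}" by auto
  moreover have "inj_on (insert n) (Pow {..<n})"
    unfolding inj_on_def by (metis Pow_iff insert_ident lessThan_iff less_irrefl subsetD)
  ultimately show ?thesis
    by (simp add: sum.union_disjoint sum.reindex)
qed

lemma g_sum:
  "g n A B a b = (\<Sum>S\<in>Pow {..<n}. min (A * lik n a S) (B * lik n b S))"
proof (induction n arbitrary: A B)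
  case 0
  then show ?case by (simp add: lik_def)
next
  case (Suc n)
  have l1: "lik (Suc n) q S = (1-q) * lik n q S" if "S \<in> Pow {..<n}" for q S
  proof -
    have "card S \<le> n" using that by (metis PowD card_lessThan card_mono finite_lessThan)
    then have "Suc n - card S = Suc (n - card S)" by simp
    then show ?thesis by (simp add: lik_def)
  qed
  have l2: "lik (Suc n) q (insert n S) = q * lik n q S" if "S \<in> Pow {..<n}" for q S
  proof -
    have f: "finite S" "n \<notin> S" using that finite_subset by auto
    then have "card (insert n S) = Suc (card S)" by simp
    then show ?thesis by (simp add: lik_def)
  qed
  show ?case
    unfolding sum_Pow_Suc g.simps Suc.IH
    by (simp add: l1 l2 mult.assoc mult.left_commute add.commute)
qed

lemma PE_g: "PE_star P0 P1 N \<alpha> Pf Pd p10 p01 = g N P0 P1 (pi10 \<alpha> Pf p10 p01) (pi11 \<alpha> Pd p10 p01)"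
  unfolding g_sum PE_star_def map_decides_H1_def
  by (rule sum.cong) auto

theorem theorem3:
  fixes P0 P1 \<alpha> Pf Pd :: real and N :: nat
  assumes "0 < P0" "0 < P1" "P0 + P1 = 1"
    and "0 < Pf" "Pf < Pd" "Pd < 1"
    and "0 \<le> \<alpha>" "\<alpha> \<le> 1"
  shows "(\<alpha> > 1/2 \<longrightarrow>
            (\<forall>p10 p01. p10 \<in> {0..1} \<and> p01 \<in> {0..1} \<and> \<alpha> * (p10 + p01) = 1 \<longrightarrow>
               (\<forall>q10 \<in> {0..1}. \<forall>q01 \<in> {0..1}.
                  PE_star P0 P1 N \<alpha> Pf Pd q10 q01 \<le> PE_star P0 P1 N \<alpha> Pf Pd p10 p01)))
       \<and> (\<alpha> \<le> 1/2 \<longrightarrow>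
            (\<forall>q10 \<in> {0..1}. \<forall>q01 \<in> {0..1}.
               PE_star P0 P1 N \<alpha> Pf Pd q10 q01 \<le> PE_star P0 P1 N \<alpha> Pf Pd 1 1))"
proof (intro conjI impI ballI allI)
  fix p10 p01 q10 q01 :: real
  assume h: "p10 \<in> {0..1} \<and> p01 \<in> {0..1} \<and> \<alpha> * (p10 + p01) = 1"
    and q: "q10 \<in> {0..1}" "q01 \<in> {0..1}"
  let ?c = "pi10 \<alpha> Pf p10 p01"
  have eq: "pi11 \<alpha> Pd p10 p01 = ?c"
  proof -
    have "pi11 \<alpha> Pd p10 p01 - ?c = (Pd - Pf) * (1 - \<alpha> * (p10 + p01))"
      unfolding pi10_def pi11_def by (simp add: algebra_simps)
    then show ?thesis using h by simp
  qed
  have "\<alpha> * (p10 * (1 - Pf)) \<le> \<alpha> * (1 - Pf)" "\<alpha> * ((1 - p01) * Pf) \<le> \<alpha> * Pf"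
    "0 \<le> \<alpha> * (p10 * (1 - Pf))" "0 \<le> \<alpha> * ((1 - p01) * Pf)" "0 \<le> (1-\<alpha>)*Pf"
    using h assms by (auto intro!: mult_left_mono mult_nonneg_nonneg)
  moreover have "(1-\<alpha>)*Pf \<le> (1 - \<alpha>) * 1" using assms by (intro mult_left_mono) auto
  moreover have "\<alpha>*(1-Pf) + \<alpha>*Pf + (1-\<alpha>)*1 = 1" by (simp add: algebra_simps)
  ultimately have c01: "0 \<le> ?c" "?c \<le> 1" unfolding pi10_def distrib_left by linarith+
  have "g N P0 P1 (pi10 \<alpha> Pf q10 q01) (pi11 \<alpha> Pd q10 q01)
      \<le> g N P0 P1 (?c + 0 * pi10 \<alpha> Pf q10 q01) (?c + 0 * pi11 \<alpha> Pd q10 q01)"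
    by (rule g_garble) (use c01 in auto)
  then show "PE_star P0 P1 N \<alpha> Pf Pd q10 q01 \<le> PE_star P0 P1 N \<alpha> Pf Pd p10 p01"
    unfolding PE_g using eq by simp
next
  fix q10 q01 :: real
  assume al: "\<alpha> \<le> 1/2" and q: "q10 \<in> {0..1}" "q01 \<in> {0..1}"
  define t0 where "t0 = 1 - 2*\<alpha>"
  define t where "t = 1 - \<alpha> * (q10 + q01)"
  have t0: "0 \<le> t0" using al by (simp add: t0_def)
  have "\<alpha> * (q10 + q01) \<le> \<alpha> * 2" using q assms by (intro mult_left_mono) auto
  then have tt0: "t0 \<le> t" by (simp add: t_def t0_def)
  have a: "pi10 \<alpha> Pf q10 q01 = Pf * t + \<alpha> * q10" "pi11 \<alpha> Pd q10 q01 = Pd * t + \<alpha> * q10"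
    unfolding pi10_def pi11_def t_def by (simp_all add: algebra_simps)
  have a0: "pi10 \<alpha> Pf 1 1 = \<alpha> + t0 * Pf" "pi11 \<alpha> Pd 1 1 = \<alpha> + t0 * Pd"
    unfolding pi10_def pi11_def t0_def by (simp_all add: algebra_simps)
  show "PE_star P0 P1 N \<alpha> Pf Pd q10 q01 \<le> PE_star P0 P1 N \<alpha> Pf Pd 1 1"
  proof (cases "t = 0")
    case True
    then have "t0 = 0" using t0 tt0 by simp
    then have "g N P0 P1 (pi10 \<alpha> Pf q10 q01) (pi11 \<alpha> Pd q10 q01)
      \<le> g N P0 P1 (\<alpha> + 0 * pi10 \<alpha> Pf q10 q01) (\<alpha> + 0 * pi11 \<alpha> Pd q10 q01)"
      by (intro g_garble) (use assms al t0_def in auto)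
    then show ?thesis unfolding PE_g a0 using \<open>t0 = 0\<close> by simp
  next
    case False
    then have tp: "t > 0" using t0 tt0 by simp
    define s where "s = t0 / t"
    define y where "y = \<alpha> * (1 - t0 * q10 / t)"
    have s0: "0 \<le> s" using t0 tp by (simp add: s_def)
    have "t0 * q10 \<le> t * 1" using q t0 tt0 by (intro mult_mono) auto
    then have "t0 * q10 / t \<le> 1" using tp by (simp add: divide_le_eq)
    then have y0: "0 \<le> y" using assms by (simp add: y_def)
    have key: "\<alpha> * (1 - \<alpha> * q10 - (1 - \<alpha>) * q01) \<ge> 0"
    proof -
      have "\<alpha> * q10 + (1 - \<alpha>) * q01 \<le> \<alpha> * 1 + (1 - \<alpha>) * 1"
        using q assms by (intro add_mono mult_left_mono) auto
      then show ?thesis using assms by simp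
    qed
    have "y + s \<le> 1 \<longleftrightarrow> (y + s) * t \<le> t" using tp by simp
    moreover have "(y + s) * t = \<alpha> * t - \<alpha> * t0 * q10 + t0"
      using tp by (simp add: y_def s_def field_simps)
    moreover have "\<alpha> * t - \<alpha> * t0 * q10 + t0 \<le> t"
      using key by (simp add: t_def t0_def algebra_simps)
    ultimately have ys: "y + s \<le> 1" by simp
    have e1: "y + s * pi10 \<alpha> Pf q10 q01 = pi10 \<alpha> Pf 1 1"
      unfolding a a0 y_def s_def using tp by (simp add: field_simps)
    have e2: "y + s * pi11 \<alpha> Pd q10 q01 = pi11 \<alpha> Pd 1 1"
      unfolding a a0 y_def s_def using tp by (simp add: field_simps)
    show ?thesis unfolding PE_g using g_garble[OF y0 s0 ys] e1 e2 by metis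
  qed
qed

end
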